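(* Let $n\in\mathbb{N}$ and let $a=(\alpha_1,\dots,\alpha_n)$, $b=(\beta_1,\dots,\beta_n)\in\mathbb{R}^n$ satisfy $\sum_{k=1}^n\alpha_k=\sum_{k=1}^n\beta_k$. Let $\mathcal{V}_a=\mathrm{conv}\{(\alpha_{\pi(1)},\dots,\alpha_{\pi(n)}):\pi\in S_n\}$ and $\mathcal{V}_b=\mathrm{conv}\{(\beta_{\pi(1)},\dots,\beta_{\pi(n)}):\pi\in S_n\}$. Then $\mathcal{V}_a$ and $\mathcal{V}_b$ cannot be properly separated by a hyperplane $H_{u,\alpha}=\{z\in\mathbb{R}^n:\langle z,u\rangle=\alpha\}$ with $u\in\mathbb{R}^n\setminus\{0\}$ and $\alpha\in\mathbb{R}$.
   Context: $S_n$ is the symmetric group on $\{1,\dots,n\}$ and $\langle\cdot,\cdot\rangle$ the standard inner product. Two convex sets $A,B$ are properly separated by a hyperplane $H$ if $A$ and $B$ lie in opposite closed half-spaces bounded by $H$ and are not both contained in $H$. *)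

theory Defs
  imports "HOL-Analysis.Analysis" "HOL-Combinatorics.Permutations"
begin

definition permutohedron :: "real ^ 'n \<Rightarrow> (real ^ 'n) set" where
  "permutohedron a = convex hull {(\<chi> i. a $ (\<pi> i)) | \<pi>. \<pi> permutes (UNIV :: 'n set)}"

definition hyperplane :: "real ^ 'n \<Rightarrow> real \<Rightarrow> (real ^ 'n) set" where
  "hyperplane u \<alpha> = {z. z \<bullet> u = \<alpha>}"

definition properly_separated_by :: "(real ^ 'n) set \<Rightarrow> (real ^ 'n) set \<Rightarrow> real ^ 'n \<Rightarrow> real \<Rightarrow> bool" where
  "properly_separated_by A B u \<alpha> \<longleftrightarrow>
     (((\<forall>x\<in>A. x \<bullet> u \<le> \<alpha>) \<and> (\<forall>y\<in>B. \<alpha> \<le> y \<bullet> u)) \<or>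
      ((\<forall>x\<in>A. \<alpha> \<le> x \<bullet> u) \<and> (\<forall>y\<in>B. y \<bullet> u \<le> \<alpha>))) \<and>
     \<not> (A \<subseteq> hyperplane u \<alpha> \<and> B \<subseteq> hyperplane u \<alpha>)"

end

theory Submission
  imports Defs
begin

lemma perm_sum_const:
  fixes a :: "'n::finite \<Rightarrow> real"
  shows "(\<Sum>\<pi>\<in>{\<pi>. \<pi> permutes (UNIV::'n set)}. a (\<pi> i)) = (\<Sum>\<pi>\<in>{\<pi>. \<pi> permutes (UNIV::'n set)}. a (\<pi> j))"
proof -
  let ?P = "{\<pi>. \<pi> permutes (UNIV::'n set)}"
  let ?t = "Transposition.transpose i j"
  have tp: "?t permutes UNIV" by (rule permutes_swap_id) auto
  have bij: "bij_betw (\<lambda>\<pi>. \<pi> \<circ> ?t) ?P ?P"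
    by (rule bij_betwI[where g="\<lambda>\<pi>. \<pi> \<circ> ?t"])
       (auto intro: permutes_compose[OF tp] simp: comp_assoc)
  have "(\<Sum>\<pi>\<in>?P. a ((\<pi> \<circ> ?t) j)) = (\<Sum>\<pi>\<in>?P. a (\<pi> j))"
    using sum.reindex_bij_betw[OF bij, of "\<lambda>\<pi>. a (\<pi> j)"] by simp
  then show ?thesis by simp
qed

lemma perm_sum_total:
  fixes a :: "'n::finite \<Rightarrow> real"
  shows "real CARD('n) * (\<Sum>\<pi>\<in>{\<pi>. \<pi> permutes (UNIV::'n set)}. a (\<pi> i))
     = real (card {\<pi>. \<pi> permutes (UNIV::'n set)}) * (\<Sum>k\<in>UNIV. a k)"
proof -
  let ?P = "{\<pi>. \<pi> permutes (UNIV::'n set)}"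
  have "real CARD('n) * (\<Sum>\<pi>\<in>?P. a (\<pi> i)) = (\<Sum>j\<in>UNIV. \<Sum>\<pi>\<in>?P. a (\<pi> j))"
  proof -
    have "(\<Sum>j\<in>UNIV. \<Sum>\<pi>\<in>?P. a (\<pi> j)) = (\<Sum>j\<in>(UNIV::'n set). \<Sum>\<pi>\<in>?P. a (\<pi> i))"
      by (rule sum.cong[OF refl]) (rule perm_sum_const)
    then show ?thesis by simp
  qed
  also have "\<dots> = (\<Sum>\<pi>\<in>?P. \<Sum>j\<in>UNIV. a (\<pi> j))" by (rule sum.swap)
  also have "\<dots> = (\<Sum>\<pi>\<in>?P. \<Sum>k\<in>UNIV. a k)"
    by (rule sum.cong[OF refl]) (simp add: sum.reindex_bij_betw[OF permutes_imp_bij])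
  also have "\<dots> = real (card ?P) * (\<Sum>k\<in>UNIV. a k)" by simp
  finally show ?thesis .
qed

lemma vertex_sum:
  fixes a u :: "real ^ 'n"
  shows "(\<Sum>\<pi>\<in>{\<pi>. \<pi> permutes (UNIV::'n set)}. (\<chi> i. a $ (\<pi> i)) \<bullet> u)
    = (\<Sum>i\<in>UNIV. u $ i * (\<Sum>\<pi>\<in>{\<pi>. \<pi> permutes (UNIV::'n set)}. a $ (\<pi> i)))"
  by (simp add: inner_vec_def sum_distrib_left sum_distrib_right mult.commute sum.swap[of _ "{\<pi>. \<pi> permutes UNIV}"])

lemma vertex_sum_eq:
  fixes a b u :: "real ^ 'n"
  assumes "(\<Sum>k\<in>UNIV. a $ k) = (\<Sum>k\<in>UNIV. b $ k)"
  shows "(\<Sum>\<pi>\<in>{\<pi>. \<pi> permutes (UNIV::'n set)}. (\<chi> i. a $ (\<pi> i)) \<bullet> u)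
       = (\<Sum>\<pi>\<in>{\<pi>. \<pi> permutes (UNIV::'n set)}. (\<chi> i. b $ (\<pi> i)) \<bullet> u)"
proof -
  have "(\<Sum>\<pi>\<in>{\<pi>. \<pi> permutes (UNIV::'n set)}. a $ (\<pi> i)) = (\<Sum>\<pi>\<in>{\<pi>. \<pi> permutes (UNIV::'n set)}. b $ (\<pi> i))" for i
  proof -
    have "real CARD('n) * (\<Sum>\<pi>\<in>{\<pi>. \<pi> permutes (UNIV::'n set)}. a $ (\<pi> i))
        = real CARD('n) * (\<Sum>\<pi>\<in>{\<pi>. \<pi> permutes (UNIV::'n set)}. b $ (\<pi> i))"
      using perm_sum_total[of "\<lambda>k. a $ k" i] perm_sum_total[of "\<lambda>k. b $ k" i] assms by simp
    then show ?thesis by simp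
  qed
  then show ?thesis unfolding vertex_sum by simp
qed

lemma sum_all_eq:
  fixes f :: "'a \<Rightarrow> real"
  assumes fin: "finite P" and le: "\<And>x. x \<in> P \<Longrightarrow> f x \<le> c"
    and K: "sum f P \<ge> real (card P) * c"
  shows "\<forall>x\<in>P. f x = c"
proof -
  have e: "(\<Sum>x\<in>P. c - f x) = real (card P) * c - sum f P"
    by (simp add: sum_subtractf)
  have nn: "\<forall>x\<in>P. 0 \<le> c - f x" using le by simp
  have "0 \<le> (\<Sum>x\<in>P. c - f x)" using nn by (intro sum_nonneg) auto
  then have z: "(\<Sum>x\<in>P. c - f x) = 0" using e K by linarith
  have iff: "(\<Sum>x\<in>P. c - f x) = 0 \<longleftrightarrow> (\<forall>x\<in>P. c - f x = 0)"
    by (rule sum_nonneg_eq_0_iff[OF fin]) (use nn in blast)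
  show ?thesis using iff z by simp
qed

lemma all_on_hyperplane:
  fixes a u :: "real ^ 'n" and K \<alpha> :: real
  assumes le: "\<And>\<pi>. \<pi> permutes (UNIV::'n set) \<Longrightarrow> (\<chi> i. a $ (\<pi> i)) \<bullet> u \<le> \<alpha>"
    and K: "(\<Sum>\<pi>\<in>{\<pi>. \<pi> permutes (UNIV::'n set)}. (\<chi> i. a $ (\<pi> i)) \<bullet> u)
        \<ge> real (card {\<pi>. \<pi> permutes (UNIV::'n set)}) * \<alpha>"
  shows "permutohedron a \<subseteq> hyperplane u \<alpha>"
proof -
  let ?P = "{\<pi>. \<pi> permutes (UNIV::'n set)}"
  have fin: "finite ?P" by (rule finite_permutations) simp
  have z: "\<forall>\<pi>\<in>?P. (\<chi> i. a $ (\<pi> i)) \<bullet> u = \<alpha>"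
    by (rule sum_all_eq[OF fin _ K]) (rule le, simp)
  have sub: "{(\<chi> i. a $ (\<pi> i)) | \<pi>. \<pi> permutes (UNIV :: 'n set)} \<subseteq> hyperplane u \<alpha>"
  proof
    fix v assume "v \<in> {(\<chi> i. a $ (\<pi> i)) | \<pi>. \<pi> permutes (UNIV :: 'n set)}"
    then obtain \<pi> where p: "\<pi> permutes UNIV" and v: "v = (\<chi> i. a $ (\<pi> i))" by blast
    have "(\<chi> i. a $ (\<pi> i)) \<bullet> u = \<alpha>" using z p by simp
    then show "v \<in> hyperplane u \<alpha>" unfolding hyperplane_def v by simp
  qed
  have cv: "convex (hyperplane u \<alpha>)"
    unfolding hyperplane_def using convex_hyperplane[of u \<alpha>] by (simp add: inner_commute)
  show ?thesis unfolding permutohedron_def by (rule hull_minimal[where S=convex, OF sub cv])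
qed

lemma case1:
  fixes a b u :: "real ^ 'n" and \<alpha> :: real
  assumes A: "\<forall>x\<in>permutohedron a. x \<bullet> u \<le> \<alpha>" and B: "\<forall>y\<in>permutohedron b. \<alpha> \<le> y \<bullet> u"
    and vA: "\<And>\<pi>. \<pi> permutes UNIV \<Longrightarrow> (\<chi> i. a $ (\<pi> i)) \<in> permutohedron a"
    and vB: "\<And>\<pi>. \<pi> permutes UNIV \<Longrightarrow> (\<chi> i. b $ (\<pi> i)) \<in> permutohedron b"
    and E: "(\<Sum>\<pi>\<in>{\<pi>. \<pi> permutes (UNIV::'n set)}. (\<chi> i. a $ (\<pi> i)) \<bullet> u) = (\<Sum>\<pi>\<in>{\<pi>. \<pi> permutes (UNIV::'n set)}. (\<chi> i. b $ (\<pi> i)) \<bullet> u)"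
  shows "permutohedron a \<subseteq> hyperplane u \<alpha> \<and> permutohedron b \<subseteq> hyperplane u \<alpha>"
proof -
  let ?P = "{\<pi>. \<pi> permutes (UNIV::'n set)}"
  have la: "\<And>\<pi>. \<pi> permutes UNIV \<Longrightarrow> (\<chi> i. a $ (\<pi> i)) \<bullet> u \<le> \<alpha>" by (rule A[rule_format, OF vA])
  have lb: "\<And>\<pi>. \<pi> permutes UNIV \<Longrightarrow> (\<chi> i. (-b) $ (\<pi> i)) \<bullet> u \<le> -\<alpha>"
  proof -
    fix \<pi> :: "'n \<Rightarrow> 'n" assume "\<pi> permutes UNIV"
    then have "\<alpha> \<le> (\<chi> i. b $ (\<pi> i)) \<bullet> u" by (rule B[rule_format, OF vB])
    moreover have "(\<chi> i. (-b) $ (\<pi> i)) = - (\<chi> i. b $ (\<pi> i))" by (simp add: vec_eq_iff)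
    ultimately show "(\<chi> i. (-b) $ (\<pi> i)) \<bullet> u \<le> -\<alpha>" by simp
  qed
  have sb: "(\<Sum>\<pi>\<in>?P. (\<chi> i. b $ (\<pi> i)) \<bullet> u) \<ge> real (card ?P) * \<alpha>"
  proof -
    have "(\<Sum>\<pi>\<in>?P. \<alpha>) \<le> (\<Sum>\<pi>\<in>?P. (\<chi> i. b $ (\<pi> i)) \<bullet> u)"
      by (rule sum_mono) (rule B[rule_format, OF vB], simp)
    then show ?thesis by simp
  qed
  have sa: "(\<Sum>\<pi>\<in>?P. (\<chi> i. a $ (\<pi> i)) \<bullet> u) \<le> real (card ?P) * \<alpha>"
  proof -
    have "(\<Sum>\<pi>\<in>?P. (\<chi> i. a $ (\<pi> i)) \<bullet> u) \<le> (\<Sum>\<pi>\<in>?P. \<alpha>)"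
      by (rule sum_mono) (rule la, simp)
    then show ?thesis by simp
  qed
  have nb: "(\<Sum>\<pi>\<in>?P. (\<chi> i. (-b) $ (\<pi> i)) \<bullet> u) = - (\<Sum>\<pi>\<in>?P. (\<chi> i. b $ (\<pi> i)) \<bullet> u)"
  proof -
    have "\<And>\<pi>. (\<chi> i. (-b) $ (\<pi> i)) \<bullet> u = - ((\<chi> i. b $ (\<pi> i)) \<bullet> u)"
    proof -
      fix \<pi> :: "'n \<Rightarrow> 'n"
      have "(\<chi> i. (-b) $ (\<pi> i)) = - (\<chi> i. b $ (\<pi> i))" by (simp add: vec_eq_iff)
      then show "(\<chi> i. (-b) $ (\<pi> i)) \<bullet> u = - ((\<chi> i. b $ (\<pi> i)) \<bullet> u)" by simp
    qed
    then show ?thesis by (simp add: sum_negf)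
  qed
  have sb': "(\<Sum>\<pi>\<in>?P. (\<chi> i. (-b) $ (\<pi> i)) \<bullet> u) \<ge> real (card ?P) * (-\<alpha>)"
    unfolding nb E[symmetric] using sa by simp
  have sa': "(\<Sum>\<pi>\<in>?P. (\<chi> i. a $ (\<pi> i)) \<bullet> u) \<ge> real (card ?P) * \<alpha>"
    unfolding E by (rule sb)
  have HA: "permutohedron a \<subseteq> hyperplane u \<alpha>"
    using la sa' by (rule all_on_hyperplane)
  have HB: "permutohedron (-b) \<subseteq> hyperplane u (-\<alpha>)"
    using lb sb' by (rule all_on_hyperplane)
  have "permutohedron b \<subseteq> hyperplane u \<alpha>"
  proof
    fix y assume "y \<in> permutohedron b"
    have "{(\<chi> i. b $ (\<pi> i)) | \<pi>. \<pi> permutes (UNIV :: 'n set)} \<subseteq> hyperplane u \<alpha>"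
    proof
      fix v assume "v \<in> {(\<chi> i. b $ (\<pi> i)) | \<pi>. \<pi> permutes (UNIV :: 'n set)}"
      then obtain \<pi> where p: "\<pi> permutes UNIV" and v: "v = (\<chi> i. b $ (\<pi> i))" by blast
      have "(\<chi> i. (-b) $ (\<pi> i)) \<in> permutohedron (-b)"
        unfolding permutohedron_def using p by (intro hull_inc) blast
      then have "(\<chi> i. (-b) $ (\<pi> i)) \<bullet> u = -\<alpha>"
        using HB unfolding hyperplane_def by blast
      moreover have "(\<chi> i. (-b) $ (\<pi> i)) = - (\<chi> i. b $ (\<pi> i))" by (simp add: vec_eq_iff)
      ultimately show "v \<in> hyperplane u \<alpha>" using v by (simp add: hyperplane_def)
    qed
    moreover have "convex (hyperplane u \<alpha>)"
      unfolding hyperplane_def using convex_hyperplane[of u \<alpha>] by (simp add: inner_commute)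
    ultimately have "permutohedron b \<subseteq> hyperplane u \<alpha>"
      unfolding permutohedron_def by (rule hull_minimal[where S=convex])
    then show "y \<in> hyperplane u \<alpha>" using \<open>y \<in> permutohedron b\<close> by blast
  qed
  then show ?thesis using HA by simp
qed

theorem lemma2:
  fixes a b :: "real ^ 'n"
  assumes "(\<Sum>k\<in>UNIV. a $ k) = (\<Sum>k\<in>UNIV. b $ k)"
  shows "\<not> (\<exists>u \<alpha>. u \<noteq> 0 \<and> properly_separated_by (permutohedron a) (permutohedron b) u \<alpha>)"
proof
  assume "\<exists>u \<alpha>. u \<noteq> 0 \<and> properly_separated_by (permutohedron a) (permutohedron b) u \<alpha>"
  then obtain u \<alpha> where ps: "properly_separated_by (permutohedron a) (permutohedron b) u \<alpha>" by blast
  let ?P = "{\<pi>. \<pi> permutes (UNIV::'n set)}"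
  have vA: "(\<chi> i. a $ (\<pi> i)) \<in> permutohedron a" if "\<pi> permutes UNIV" for \<pi>
    unfolding permutohedron_def using that by (intro hull_inc) blast
  have vB: "(\<chi> i. b $ (\<pi> i)) \<in> permutohedron b" if "\<pi> permutes UNIV" for \<pi>
    unfolding permutohedron_def using that by (intro hull_inc) blast
  have E: "(\<Sum>\<pi>\<in>?P. (\<chi> i. a $ (\<pi> i)) \<bullet> u) = (\<Sum>\<pi>\<in>?P. (\<chi> i. b $ (\<pi> i)) \<bullet> u)"
    by (rule vertex_sum_eq[OF assms])
  from ps show False
    unfolding properly_separated_by_def
  proof (elim conjE disjE)
    assume A: "\<forall>x\<in>permutohedron a. x \<bullet> u \<le> \<alpha>" and B: "\<forall>y\<in>permutohedron b. \<alpha> \<le> y \<bullet> u"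
      and n: "\<not> (permutohedron a \<subseteq> hyperplane u \<alpha> \<and> permutohedron b \<subseteq> hyperplane u \<alpha>)"
    show False using case1[OF A B vA vB E] n by blast
  next
    assume A: "\<forall>x\<in>permutohedron a. \<alpha> \<le> x \<bullet> u" and B: "\<forall>y\<in>permutohedron b. y \<bullet> u \<le> \<alpha>"
      and n: "\<not> (permutohedron a \<subseteq> hyperplane u \<alpha> \<and> permutohedron b \<subseteq> hyperplane u \<alpha>)"
    show False using case1[OF B A vB vA E[symmetric]] n by blast
  qed
qed

end
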